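(* Let $0\le\lambda<1$, let $Y_1,Y_2,\ldots$ be i.i.d. Poisson random variables with mean $\lambda$, and define $X=0$ if $Y_1=0$ and otherwise $X=\min\{z\ge1:\sum_{i=1}^{z}Y_i\le z\}$. Let $W=\max(X,1)$. Then $$\Pr(W=w)=\begin{cases}(\lambda+1)e^{-\lambda}, & w=1,\\ \dfrac{(w-1)^{w-2}}{w\,(w-2)!}\lambda^{w}e^{-w\lambda}, & w\ge2,\end{cases}$$ and, for $\lambda>0$, $$\mathbb{E}[W]=\frac{1}{\lambda}\mathbb{E}[X]=\frac{e^{-\lambda}}{1-\lambda}.$$
   Context: $\mathbb{E}[X]=\frac{\lambda}{1-\lambda}e^{-\lambda}$ is the mean of $X$; $W$ is the inter-renewal time of a modified renewal process in which every inter-decoding time of $0$ slots is replaced by $1$ slot. *)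

theory Defs
  imports "HOL-Probability.Probability"
begin

text \<open>The random variable X of the paper: X = 0 if Y 1 = 0, otherwise the least
  z >= 1 with Y 1 + ... + Y z <= z.  (On the null event where no such z exists,
  LEAST yields an unspecified value.)\<close>
definition stop_time :: "(nat \<Rightarrow> 'a \<Rightarrow> nat) \<Rightarrow> 'a \<Rightarrow> nat" where
  "stop_time Y \<omega> = (if Y 1 \<omega> = 0 then 0
      else (LEAST z. 1 \<le> z \<and> (\<Sum>i=1..z. Y i \<omega>) \<le> z))"

end

theory Submission
  imports Defs
begin


fun good :: "nat \<Rightarrow> nat list \<Rightarrow> bool" where
  "good h [] = (h = 0)"
| "good h (y#ys) = (0 < h \<and> good (h + y - 1) ys)"

lemma good_char:
  "good h ys \<longleftrightarrow> (\<forall>z<length ys. z < h + sum_list (take z ys)) \<and> h + sum_list ys = length ys"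
proof (induction ys arbitrary: h)
  case Nil then show ?case by simp
next
  case (Cons y ys)
  show ?case
  proof
    assume g: "good h (y#ys)"
    then have h: "0 < h" and g2: "good (h+y-1) ys" by auto
    from Cons.IH g2 have A: "\<forall>z<length ys. z < h + y - 1 + sum_list (take z ys)"
      and B: "h + y - 1 + sum_list ys = length ys" by auto
    have "\<forall>z<length (y#ys). z < h + sum_list (take z (y#ys))"
    proof (intro allI impI)
      fix z assume "z < length (y#ys)"
      then show "z < h + sum_list (take z (y#ys))"
        using A h by (cases z) auto
    qed
    with B h show "(\<forall>z<length (y#ys). z < h + sum_list (take z (y#ys))) \<and> h + sum_list (y#ys) = length (y#ys)"
      by auto
  next
    assume R: "(\<forall>z<length (y#ys). z < h + sum_list (take z (y#ys))) \<and> h + sum_list (y#ys) = length (y#ys)"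
    then have h: "0 < h" by (metis length_Cons add.right_neutral sum_list.Nil take0 zero_less_Suc)
    have A: "\<forall>z<length ys. z < h + y - 1 + sum_list (take z ys)"
    proof (intro allI impI)
      fix z assume "z < length ys"
      with R have "Suc z < h + sum_list (take (Suc z) (y#ys))" by auto
      then show "z < h + y - 1 + sum_list (take z ys)" using h by auto
    qed
    have B: "h + y - 1 + sum_list ys = length ys" using R h by auto
    from Cons.IH A B h show "good h (y#ys)" by auto
  qed
qed

lemma good_sum: "good h ys \<Longrightarrow> h + sum_list ys = length ys"
  using good_char by blast

lemma good_prefix: "good h xs \<Longrightarrow> good h (xs @ zs) \<Longrightarrow> zs = []"
proof (induction xs arbitrary: h)
  case Nil then show ?case by (cases zs) auto
next
  case (Cons x xs) then show ?case by auto
qed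

lemma good_or_big:
  "0 < h \<Longrightarrow> (\<exists>m\<le>length ys. good h (take m ys)) \<or> length ys < h + sum_list ys"
proof (induction ys arbitrary: h)
  case Nil then show ?case by simp
next
  case (Cons y ys)
  show ?case
  proof (cases "h + y - 1 = 0")
    case True
    then have "good h (take 1 (y#ys))" using Cons.prems by simp
    then show ?thesis by (metis One_nat_def Suc_le_mono le0 length_Cons)
  next
    case False
    then have "0 < h + y - 1" by simp
    from Cons.IH[OF this] show ?thesis
    proof
      assume "\<exists>m\<le>length ys. good (h + y - 1) (take m ys)"
      then obtain m where "m \<le> length ys" "good (h+y-1) (take m ys)" by blast
      then have "Suc m \<le> length (y#ys)" "good h (take (Suc m) (y#ys))" using Cons.prems by auto
      then show ?thesis by blast
    next
      assume "length ys < h + y - 1 + sum_list ys"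
      then show ?thesis by auto
    qed
  qed
qed

lemma finite_lists_bounded: "finite {ys::nat list. length ys = n \<and> sum_list ys \<le> K}"
proof -
  have "{ys::nat list. length ys = n \<and> sum_list ys \<le> K} \<subseteq> {ys. set ys \<subseteq> {..K} \<and> length ys = n}"
    using member_le_sum_list by fastforce
  moreover have "finite {ys. set ys \<subseteq> {..K::nat} \<and> length ys = n}"
    by (rule finite_lists_length_eq) simp
  ultimately show ?thesis by (rule finite_subset)
qed

definition GS :: "nat \<Rightarrow> nat \<Rightarrow> nat list set" where
  "GS n h = {ys. length ys = n \<and> good h ys}"

lemma finite_GS: "finite (GS n h)"
  by (rule finite_subset[OF _ finite_lists_bounded[of n n]]) (auto simp: GS_def dest: good_sum)

definition LS :: "nat \<Rightarrow> nat \<Rightarrow> nat list set" where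
  "LS n k = {ys. length ys = n \<and> sum_list ys = k}"

lemma finite_LS: "finite (LS n k)"
  by (rule finite_subset[OF _ finite_lists_bounded[of n k]]) (auto simp: LS_def)

definition wt :: "nat list \<Rightarrow> real" where
  "wt ys = prod_list (map (\<lambda>y. 1 / fact y) ys)"

lemma wt_Cons[simp]: "wt (y#ys) = wt ys / fact y" "wt [] = 1"
  by (auto simp: wt_def)

lemma GS_Suc: "0 < h \<Longrightarrow> GS (Suc n) h = (\<Union>y\<in>{..n}. Cons y ` GS n (h + y - 1))"
proof (intro equalityI subsetI)
  fix ys assume h: "0 < h" and ys: "ys \<in> GS (Suc n) h"
  then obtain y zs where ys': "ys = y # zs" unfolding GS_def by (cases ys) auto
  with ys h have "good (h+y-1) zs" "length zs = n" by (auto simp: GS_def)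
  then have "y \<le> n" using good_sum h by fastforce
  then show "ys \<in> (\<Union>y\<in>{..n}. Cons y ` GS n (h + y - 1))"
    using ys' \<open>good (h+y-1) zs\<close> \<open>length zs = n\<close> by (auto simp: GS_def)
qed (auto simp: GS_def)

lemma LS_Suc: "LS (Suc n) k = (\<Union>y\<in>{..k}. Cons y ` LS n (k - y))"
proof (intro equalityI subsetI)
  fix ys assume ys: "ys \<in> LS (Suc n) k"
  then obtain y zs where ys': "ys = y # zs" unfolding LS_def by (cases ys) auto
  with ys have "y \<in> {..k}" "zs \<in> LS n (k - y)" by (auto simp: LS_def)
  then show "ys \<in> (\<Union>y\<in>{..k}. Cons y ` LS n (k - y))" using ys' by blast
qed (auto simp: LS_def)

lemma sum_Cons_Union:
  assumes "finite I" "\<And>y. finite (A y)"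
  shows "(\<Sum>ys\<in>(\<Union>y\<in>I. Cons y ` A y). wt ys) = (\<Sum>y\<in>I. (\<Sum>ys\<in>A y. wt ys) / fact y)"
proof -
  have "(\<Sum>ys\<in>(\<Union>y\<in>I. Cons y ` A y). wt ys) = (\<Sum>y\<in>I. \<Sum>ys\<in>Cons y ` A y. wt ys)"
    by (rule sum.UNION_disjoint) (use assms in auto)
  also have "\<dots> = (\<Sum>y\<in>I. (\<Sum>ys\<in>A y. wt ys) / fact y)"
    by (rule sum.cong[OF refl]) (simp add: sum.reindex sum_divide_distrib)
  finally show ?thesis .
qed

lemma aux1: "(\<Sum>y\<le>m. (a::real)^(m-y)/(fact y * fact (m-y))) = (a+1)^m / fact m"
proof -
  have "(a+1)^m = (1+a)^m" by (simp add: add.commute)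
  also have "\<dots> = (\<Sum>y\<le>m. of_nat (m choose y) * 1^y * a^(m-y))" by (rule binomial_ring)
  also have "\<dots> = (\<Sum>y\<le>m. fact m * (a^(m-y)/(fact y * fact (m-y))))"
    by (rule sum.cong[OF refl]) (simp add: binomial_fact)
  also have "\<dots> = fact m * (\<Sum>y\<le>m. a^(m-y)/(fact y * fact (m-y)))"
    by (simp add: sum_distrib_left)
  finally show ?thesis by (simp add: field_simps)
qed

lemma aux2: "(\<Sum>y\<le>Suc m. real y * (a::real)^(Suc m-y)/(fact y * fact (Suc m-y))) = (a+1)^m / fact m"
proof -
  have "(\<Sum>y\<le>Suc m. real y * a^(Suc m-y)/(fact y * fact (Suc m-y)))
      = (\<Sum>y\<le>m. real (Suc y) * a^(Suc m - Suc y)/(fact (Suc y) * fact (Suc m - Suc y)))"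
    by (subst sum.atMost_Suc_shift) simp
  also have "\<dots> = (\<Sum>y\<le>m. a^(m-y)/(fact y * fact (m-y)))"
    by (rule sum.cong[OF refl]) (simp add: fact_Suc field_simps del: of_nat_Suc)
  finally show ?thesis using aux1 by simp
qed

lemma alg_id:
  fixes K M F P N :: real
  assumes "F > 0" "N > 0" "N = K + M + 1" "K \<ge> 0" "M \<ge> 0"
  shows "(K * ((N+1)*P / ((M+1)*F)) + P/F) / N = (K+1) * ((N+1)*P) / ((N+1) * ((M+1)*F))"
proof -
  have M: "M + 1 > 0" using assms by simp
  have MF: "F + F*M \<noteq> 0" "F*M + F \<noteq> 0" "(M+1)*F \<noteq> 0" using M assms(1)
    by (metis add.commute distrib_left mult.commute mult.right_neutral mult_eq_0_iff order_less_irrefl)+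
  have a: "P/F = (M+1)*P/((M+1)*F)" using M by simp
  have b: "K * ((N+1)*P / ((M+1)*F)) = K*(N+1)*P/((M+1)*F)" by simp
  have "(K * ((N+1)*P / ((M+1)*F)) + P/F) = (K*(N+1)*P + (M+1)*P)/((M+1)*F)"
    unfolding a b by (simp add: add_divide_distrib)
  then have "(K * ((N+1)*P / ((M+1)*F)) + P/F) / N = P * (K*(N+1) + (M+1)) / ((M+1)*F*N)"
    by (simp add: algebra_simps)
  also have "K*(N+1) + (M+1) = (K+1)*N" using assms by (simp add: algebra_simps)
  also have "P * ((K+1)*N) / ((M+1)*F*N) = (K+1) * P / ((M+1)*F)"
    using assms(2) by simp
  also have "\<dots> = (K+1) * ((N+1)*P) / ((N+1) * ((M+1)*F))"
    using assms(2) by simp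
  finally show ?thesis .
qed

lemma step_arith:
  assumes n: "1 \<le> n" and kn: "k \<le> n"
  shows "(\<Sum>y\<le>n-k. real (k+y) * real n^(n-k-y) / (real n * fact (n-k-y)) / fact y)
       = real (k+1) * (real n+1)^(n-k) / ((real n+1) * fact (n-k))"
proof -
  define m where "m = n - k"
  have nm: "real n = real k + real m" using kn by (simp add: m_def)
  have np: "real n > 0" using n by simp
  have "(\<Sum>y\<le>m. real (k+y) * real n^(m-y) / (real n * fact (m-y)) / fact y)
      = (real k * (\<Sum>y\<le>m. real n^(m-y)/(fact y * fact (m-y)))
         + (\<Sum>y\<le>m. real y * real n^(m-y)/(fact y * fact (m-y)))) / real n"
    by (simp add: sum_distrib_left sum_divide_distrib sum.distrib[symmetric] field_simps)
  also have "\<dots> = real (k+1) * (real n+1)^m / ((real n+1) * fact m)"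
  proof (cases m)
    case 0
    then show ?thesis using nm np by simp
  next
    case (Suc m')
    have "(real k * ((real n+1)^m / fact m) + (real n+1)^m' / fact m') / real n
        = real (k+1) * (real n+1)^m / ((real n+1) * fact m)"
    proof -
      have e: "(real n+1)^m = (real n+1) * (real n+1)^m'" "fact m = (real m'+1) * (fact m' :: real)"
        using Suc by (simp_all add: fact_Suc)
      have F: "fact m' > (0::real)" by simp
      have P: "(real n+1)^m' > 0" using np by simp
      have nm': "real n = real k + real m' + 1" using nm Suc by simp
      show ?thesis unfolding e of_nat_add of_nat_1
        by (rule alg_id[OF F np nm']) simp_all
    qed
    then show ?thesis using aux1[where m=m and a="real n"] aux2[where m=m' and a="real n"] Suc by simp
  qed
  finally show ?thesis unfolding m_def by simp
qed

definition NN :: "nat \<Rightarrow> nat \<Rightarrow> real" where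
  "NN n h = (\<Sum>ys\<in>GS n h. wt ys)"

definition NNc :: "nat \<Rightarrow> nat \<Rightarrow> real" where
  "NNc n h = (if h = 0 then (if n = 0 then 1 else 0) else if n < h then 0
     else real h * real n ^ (n-h) / (real n * fact (n-h)))"

lemma GS_0: "GS 0 h = (if h = 0 then {[]} else {})"
  by (auto simp: GS_def)

lemma GS_Suc0: "GS (Suc n) 0 = {}"
  by (auto simp: GS_def length_Suc_conv)

lemma NN_rec: "0 < h \<Longrightarrow> NN (Suc n) h = (\<Sum>y\<le>n. NN n (h+y-1) / fact y)"
  unfolding NN_def GS_Suc by (rule sum_Cons_Union) (auto simp: finite_GS)

lemma NNc_pos: "1 \<le> n \<Longrightarrow> j \<le> n \<Longrightarrow> NNc n j = real j * real n ^ (n-j) / (real n * fact (n-j))"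
  by (simp add: NNc_def)

lemma NN_closed: "NN n h = NNc n h"
proof (induction n arbitrary: h)
  case 0 then show ?case by (simp add: NN_def NNc_def GS_0)
next
  case (Suc n)
  show ?case
  proof (cases "h = 0")
    case True then show ?thesis by (simp add: NN_def NNc_def GS_Suc0)
  next
    case False
    then have h: "0 < h" by simp
    have e: "NN (Suc n) h = (\<Sum>y\<le>n. NNc n (h+y-1) / fact y)"
      using NN_rec[OF h] Suc.IH by simp
    show ?thesis
    proof (cases "n = 0")
      case True
      then show ?thesis using e h by (auto simp: NNc_def)
    next
      case False
      then have n1: "1 \<le> n" by simp
      show ?thesis
      proof (cases "Suc n < h")
        case True
        have "(\<Sum>y\<le>n. NNc n (h+y-1) / fact y) = 0"
          by (rule sum.neutral) (use True in \<open>auto simp: NNc_def\<close>)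
        then show ?thesis unfolding e using True by (simp add: NNc_def)
      next
        case False
        define k where "k = h - 1"
        have hk: "h = k + 1" using h k_def by simp
        have kn: "k \<le> n" using False hk by simp
        have "(\<Sum>y\<le>n. NNc n (h+y-1) / fact y) = (\<Sum>y\<le>n. NNc n (k+y) / fact y)"
          by (simp add: hk)
        also have "\<dots> = (\<Sum>y\<le>n-k. NNc n (k+y) / fact y)"
          by (rule sum.mono_neutral_right) (auto simp: NNc_def)
        also have "\<dots> = (\<Sum>y\<le>n-k. real (k+y) * real n^(n-k-y) / (real n * fact (n-k-y)) / fact y)"
        proof (rule sum.cong[OF refl])
          fix y assume "y \<in> {..n-k}"
          then have "k + y \<le> n" using kn by auto
          then show "NNc n (k+y) / fact y = real (k+y) * real n^(n-k-y) / (real n * fact (n-k-y)) / fact y"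
            using NNc_pos[OF n1, of "k+y"] by (simp add: diff_diff_left)
        qed
        also have "\<dots> = real (k+1) * (real n+1)^(n-k) / ((real n+1) * fact (n-k))"
          by (rule step_arith[OF n1 kn])
        also have "\<dots> = NNc (Suc n) h" using kn by (simp add: NNc_def hk add.commute)
        finally show ?thesis using e by simp
      qed
    qed
  qed
qed

lemma LS_0: "LS 0 k = (if k = 0 then {[]} else {})"
  by (auto simp: LS_def)

lemma multinomial: "(\<Sum>ys\<in>LS n k. wt ys) = real n ^ k / fact k"
proof (induction n arbitrary: k)
  case 0 then show ?case by (simp add: LS_0)
next
  case (Suc n)
  have "(\<Sum>ys\<in>LS (Suc n) k. wt ys) = (\<Sum>y\<le>k. (\<Sum>ys\<in>LS n (k-y). wt ys) / fact y)"
    unfolding LS_Suc by (rule sum_Cons_Union) (auto simp: finite_LS)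
  also have "\<dots> = (\<Sum>y\<le>k. real n^(k-y)/(fact y * fact (k-y)))"
    by (rule sum.cong[OF refl]) (simp add: Suc.IH)
  also have "\<dots> = (real n + 1)^k / fact k" by (rule aux1)
  finally show ?case by (simp add: add.commute)
qed

lemma AW_sum: "(\<Sum>j\<le>v. NNc (v+1) (j+1) / fact (j+2)) = real (v+1)^v / (real (v+2) * fact v)"
proof -
  define a where "a = real (v+1)"
  have apos: "a > 0" by (simp add: a_def)
  define F where "F y = (real y - 1) * a^(Suc (Suc v) - y) / (fact y * fact (Suc (Suc v) - y))" for y
  have A: "(\<Sum>y\<le>Suc (Suc v). real y * a^(Suc (Suc v) - y)/(fact y * fact (Suc (Suc v)-y))) = (a+1)^(Suc v)/fact (Suc v)"
    by (rule aux2)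
  have B: "(\<Sum>y\<le>Suc (Suc v). a^(Suc (Suc v) - y)/(fact y * fact (Suc (Suc v)-y))) = (a+1)^(Suc (Suc v))/fact (Suc (Suc v))"
    by (rule aux1)
  have AB: "(a+1)^(Suc v)/fact (Suc v) = (a+1)^(Suc (Suc v))/fact (Suc (Suc v))"
  proof -
    have "a + 1 = real (Suc (Suc v))" by (simp add: a_def)
    then show ?thesis by (simp add: fact_Suc field_simps del: of_nat_Suc)
  qed
  have S0: "(\<Sum>y\<le>Suc (Suc v). F y) = 0"
    unfolding F_def using A B AB by (simp add: diff_divide_distrib left_diff_distrib sum_subtractf)
  have "(\<Sum>y\<le>Suc (Suc v). F y) = F 0 + (F 1 + (\<Sum>j\<le>v. F (j+2)))"
    by (simp only: sum.atMost_Suc_shift) simp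
  moreover have "F 0 = -(a^(Suc (Suc v)) / fact (Suc (Suc v)))" "F 1 = 0" by (simp_all add: F_def)
  ultimately have S1: "(\<Sum>j\<le>v. F (j+2)) = a^(Suc (Suc v)) / fact (Suc (Suc v))"
    using S0 by simp
  have "(\<Sum>j\<le>v. NNc (v+1) (j+1) / fact (j+2)) = (\<Sum>j\<le>v. F (j+2) / a)"
  proof (rule sum.cong[OF refl])
    fix j assume "j \<in> {..v}"
    then have j: "j \<le> v" by simp
    have "NNc (v+1) (j+1) = real (j+1) * a^(v-j) / (a * fact (v-j))"
      using j by (simp add: NNc_def a_def)
    moreover have "F (j+2) = real (j+1) * a^(v-j) / (fact (j+2) * fact (v-j))"
      using j by (simp add: F_def Suc_diff_le)
    ultimately show "NNc (v+1) (j+1) / fact (j+2) = F (j+2) / a" by simp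
  qed
  also have "\<dots> = a^(Suc (Suc v)) / fact (Suc (Suc v)) / a"
    using S1 by (simp only: sum_divide_distrib[symmetric])
  also have "\<dots> = real (v+1)^v / (real (v+2) * fact v)"
    using apos by (simp add: a_def fact_Suc field_simps del: of_nat_Suc)
  finally show ?thesis .
qed

lemma tele_aux: "0 < m \<Longrightarrow> (\<Sum>j<Suc k. (real m - real j) * real m^j / (real m * fact j)) = real m^k / fact k"
proof (induction k)
  case 0 then show ?case by simp
next
  case (Suc k)
  have "(\<Sum>j<Suc (Suc k). (real m - real j) * real m^j / (real m * fact j))
      = real m^k / fact k + (real m - real (Suc k)) * real m^Suc k / (real m * fact (Suc k))"
    using Suc by simp
  also have "\<dots> = real m^Suc k / fact (Suc k)"
    using Suc.prems by (simp add: fact_Suc field_simps del: of_nat_Suc)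
  finally show ?case .
qed

lemma tele: "0 < m \<Longrightarrow> (\<Sum>h\<in>{1..m}. NNc m h) = real m^m / fact m"
proof -
  assume m: "0 < m"
  have "(\<Sum>h\<in>{1..m}. NNc m h) = (\<Sum>j<m. NNc m (m - j))"
    by (rule sum.reindex_bij_witness[of _ "\<lambda>h. m - h" "\<lambda>j. m - j"]) auto
  also have "\<dots> = (\<Sum>j<Suc (m-1). (real m - real j) * real m^j / (real m * fact j))"
  proof -
    have "Suc (m-1) = m" using m by simp
    moreover have "NNc m (m - j) = (real m - real j) * real m^j / (real m * fact j)" if "j < m" for j
      using that by (simp add: NNc_def of_nat_diff)
    ultimately show ?thesis by simp
  qed
  also have "\<dots> = real m^(m-1) / fact (m-1)" by (rule tele_aux[OF m])
  also have "\<dots> = real m^m / fact m"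
  proof -
    obtain k where k: "m = Suc k" using m by (cases m) auto
    show ?thesis unfolding k by (simp add: fact_Suc field_simps del: of_nat_Suc)
  qed
  finally show ?thesis .
qed

lemma exp_series_real: "(\<lambda>k. x^k / fact k) sums exp (x::real)"
  using exp_converges[of x] by (simp add: divide_inverse mult.commute)

lemma exp_partial_le: "0 \<le> (x::real) \<Longrightarrow> (\<Sum>k\<le>K. x^k / fact k) \<le> exp x"
proof -
  assume x: "0 \<le> x"
  have "(\<lambda>k. if k \<in> {..K} then x^k / fact k else 0) sums (\<Sum>k\<in>{..K}. if k \<in> {..K} then x^k / fact k else 0)"
    by (rule sums_finite) auto
  then have s: "(\<lambda>k. if k \<in> {..K} then x^k / fact k else 0) sums (\<Sum>k\<le>K. x^k / fact k)" by simp
  show ?thesis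
    by (rule sums_le[OF _ s exp_series_real]) (use x in auto)
qed

lemma exp_tail:
  fixes x t :: real
  assumes x: "0 \<le> x" and t: "1 \<le> t"
  shows "exp x \<le> (\<Sum>k\<le>K. x^k / fact k) + exp (x*t) / t^K"
proof -
  have "(\<lambda>k. if k \<in> {..K} then x^k / fact k else 0) sums (\<Sum>k\<in>{..K}. if k \<in> {..K} then x^k / fact k else 0)"
    by (rule sums_finite) auto
  then have s3: "(\<lambda>k. if k \<in> {..K} then x^k / fact k else 0) sums (\<Sum>k\<le>K. x^k / fact k)" by simp
  have s2: "(\<lambda>k. (x*t)^k / fact k / t^K) sums (exp (x*t) / t^K)"
    by (rule sums_divide[OF exp_series_real])
  have le: "x^k / fact k \<le> (if k \<in> {..K} then x^k / fact k else 0) + (x*t)^k / fact k / t^K" for k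
  proof (cases "k \<le> K")
    case True
    then show ?thesis using x t by simp
  next
    case False
    have "t^K \<le> t^k" using False t by (intro power_increasing) auto
    then have "1 \<le> t^k / t^K" using t by simp
    then have "x^k / fact k * 1 \<le> x^k / fact k * (t^k / t^K)"
      using x by (intro mult_left_mono) auto
    then show ?thesis using False by (simp add: power_mult_distrib)
  qed
  show ?thesis by (rule sums_le[OF _ exp_series_real sums_add[OF s3 s2]]) (use le in auto)
qed

lemma key_ratio: assumes "0 < l" "l < (1::real)" shows "l * exp (1 - l) < 1"
proof -
  have "1 + (l-1)/2 \<le> exp ((l-1)/2)" by (rule exp_ge_add_one_self)
  moreover have "0 \<le> 1 + (l-1)/2" using assms(1) by (simp add: field_simps)
  ultimately have "(1 + (l-1)/2)^2 \<le> exp ((l-1)/2)^2" by (rule power_mono)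
  also have "exp ((l-1)/2)^2 = exp (l - 1)" by (simp add: power2_eq_square exp_add[symmetric])
  finally have "(1 + (l-1)/2)^2 \<le> exp (l-1)" .
  moreover have "l < (1 + (l-1)/2)^2"
  proof -
    have "(1 + (l-1)/2)^2 = l + (l-1)^2/4" by (simp add: power2_eq_square field_simps)
    moreover have "(l-1)^2 > 0" using assms by simp
    ultimately show ?thesis by simp
  qed
  ultimately have "l < exp (l - 1)" by simp
  then have "l * exp (1 - l) < exp (l-1) * exp (1-l)" by simp
  also have "\<dots> = 1" by (simp add: exp_add[symmetric])
  finally show ?thesis .
qed

definition L :: "real \<Rightarrow> nat \<Rightarrow> nat \<Rightarrow> real" where
  "L l n K = (\<Sum>k\<le>K. (real n * l)^k / fact k * exp (- (real n * l)))"

lemma L_le1: "0 \<le> l \<Longrightarrow> L l n K \<le> 1"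
proof -
  assume l: "0 \<le> l"
  have "L l n K = (\<Sum>k\<le>K. (real n * l)^k / fact k) * exp (- (real n * l))"
    by (simp add: L_def sum_distrib_right)
  also have "\<dots> \<le> exp (real n * l) * exp (- (real n * l))"
    by (rule mult_right_mono[OF exp_partial_le]) (use l in auto)
  also have "\<dots> = 1" by (simp add: exp_minus)
  finally show ?thesis .
qed

lemma L_lim: assumes l: "0 \<le> l" "l < 1" shows "(\<lambda>n. L l n (n - h)) \<longlonglongrightarrow> 1"
proof (cases "l = 0")
  case True
  then have "L l n (n-h) = 1" for n by (simp add: L_def sum.atMost_shift zero_power)
  then show ?thesis by simp
next
  case False
  then have lp: "0 < l" using l by simp
  define r where "r = l * exp (1 - l)"
  have r: "0 \<le> r" "r < 1" using key_ratio[OF lp l(2)] lp by (auto simp: r_def)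
  have lim: "(\<lambda>n. 1 - r^n / l^h) \<longlonglongrightarrow> 1 - 0 / l^h"
    by (intro tendsto_intros LIMSEQ_power_zero) (use r lp in auto)
  have lower: "1 - r^n / l^h \<le> L l n (n-h)" if "h \<le> n" for n
  proof -
    define x where "x = real n * l"
    have x: "0 \<le> x" using lp by (simp add: x_def)
    have t: "1 \<le> 1/l" using lp l by simp
    have "exp x \<le> (\<Sum>k\<le>n-h. x^k / fact k) + exp (x * (1/l)) / (1/l)^(n-h)"
      by (rule exp_tail[OF x t])
    then have "exp x * exp (-x) \<le> ((\<Sum>k\<le>n-h. x^k / fact k) + exp (x * (1/l)) / (1/l)^(n-h)) * exp (-x)"
      by (rule mult_right_mono) simp
    then have A: "1 \<le> L l n (n-h) + exp (x * (1/l)) / (1/l)^(n-h) * exp (-x)"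
      by (simp add: exp_minus L_def x_def sum_distrib_right distrib_right)
    have "exp (x * (1/l)) / (1/l)^(n-h) * exp (-x) = exp (real n) * l^(n-h) * exp (- (real n * l))"
      using lp by (simp add: x_def power_divide)
    also have "\<dots> = (l * exp (1 - l))^n / l^h"
    proof -
      have e1: "l^(n-h) = l^n / l^h" using that lp by (simp add: power_diff)
      have e2: "(l * exp (1-l))^n = l^n * exp (real n * (1 - l))"
        by (simp add: power_mult_distrib exp_of_nat_mult)
      have e3: "exp (real n) * exp (- (real n * l)) = exp (real n * (1 - l))"
        by (simp add: exp_add[symmetric] algebra_simps)
      have "exp (real n) * l^(n-h) * exp (- (real n * l)) = l^n / l^h * (exp (real n) * exp (- (real n * l)))"
        unfolding e1 by simp
      also have "\<dots> = (l * exp (1 - l))^n / l^h" unfolding e2 e3 by simp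
      finally show ?thesis .
    qed
    finally show ?thesis using A r_def by simp
  qed
  show ?thesis
  proof (rule tendsto_sandwich[OF _ _ _ tendsto_const])
    show "\<forall>\<^sub>F n in sequentially. 1 - r^n / l^h \<le> L l n (n - h)"
      using eventually_ge_at_top[of h] by (rule eventually_mono) (rule lower)
    show "\<forall>\<^sub>F n in sequentially. L l n (n - h) \<le> 1" using L_le1 l by simp
    show "(\<lambda>n. 1 - r^n / l^h) \<longlonglongrightarrow> 1" using lim by simp
  qed
qed

lemma double_sum:
  fixes a :: "nat \<Rightarrow> nat \<Rightarrow> real"
  assumes nn: "\<And>m h. 0 \<le> a m h" and van: "\<And>m h. m < h \<Longrightarrow> a m h = 0"
    and col: "\<And>h. (\<lambda>m. a m h) sums c h" and sc: "summable c"
  shows "(\<lambda>m. \<Sum>h\<le>m. a m h) sums suminf c"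
proof -
  define A where "A m = (\<Sum>h\<le>m. a m h)" for m
  have cnn: "0 \<le> c h" for h using col[of h] nn by (metis sums_unique suminf_nonneg sums_summable)
  have Ann: "0 \<le> A m" for m unfolding A_def by (rule sum_nonneg) (use nn in auto)
  have colle: "(\<Sum>m<n. a m h) \<le> c h" for n h
  proof -
    have "(\<Sum>m<n. a m h) \<le> (\<Sum>m. a m h)"
      by (rule sum_le_suminf) (use col[of h] nn in \<open>auto simp: sums_iff\<close>)
    then show ?thesis using col[of h] by (simp add: sums_iff)
  qed
  have part: "(\<Sum>m<n. A m) \<le> suminf c" for n
  proof -
    have "(\<Sum>m<n. A m) = (\<Sum>m<n. \<Sum>h<n. a m h)"
    proof (rule sum.cong[OF refl])
      fix m assume "m \<in> {..<n}"
      then have "{..m} \<subseteq> {..<n}" by auto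
      then show "A m = (\<Sum>h<n. a m h)" unfolding A_def
        by (intro sum.mono_neutral_left) (auto intro: van)
    qed
    also have "\<dots> = (\<Sum>h<n. \<Sum>m<n. a m h)" by (rule sum.swap)
    also have "\<dots> \<le> (\<Sum>h<n. c h)" by (rule sum_mono) (rule colle)
    also have "\<dots> \<le> suminf c" by (rule sum_le_suminf[OF sc]) (use cnn in auto)
    finally show ?thesis .
  qed
  have sA: "summable A" by (rule summableI_nonneg_bounded[OF Ann part])
  have le1: "suminf A \<le> suminf c" by (rule suminf_le_const[OF sA part])
  have le2: "suminf c \<le> suminf A"
  proof (rule suminf_le_const[OF sc])
    fix H
    have "(\<Sum>h<H. c h) = (\<Sum>h<H. \<Sum>m. a m h)" using col by (simp add: sums_iff)
    also have "\<dots> = (\<Sum>m. \<Sum>h<H. a m h)"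
      by (rule suminf_sum[symmetric]) (use col in \<open>auto simp: sums_iff\<close>)
    also have "\<dots> \<le> suminf A"
    proof (rule suminf_le)
      fix m
      have "(\<Sum>h<H. a m h) = (\<Sum>h\<in>{..<H} \<inter> {..m}. a m h)"
        by (rule sum.mono_neutral_right) (auto intro: van)
      also have "\<dots> \<le> A m" unfolding A_def
        by (rule sum_mono2) (auto intro: nn)
      finally show "(\<Sum>h<H. a m h) \<le> A m" .
    next
      show "summable (\<lambda>m. \<Sum>h<H. a m h)"
        by (rule summable_sum) (use col in \<open>auto simp: sums_iff\<close>)
    qed (rule sA)
    finally show "(\<Sum>h<H. c h) \<le> suminf A" .
  qed
  show ?thesis using sA le1 le2 unfolding A_def[symmetric]
    by (metis antisym summable_sums)
qed

definition AW :: "nat \<Rightarrow> nat list set" where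
  "AW w = {ys. length ys = w \<and> sum_list ys \<le> w \<and> (\<forall>z. 1 \<le> z \<and> z < w \<longrightarrow> z < sum_list (take z ys))}"

lemma AW_char:
  "ys \<in> AW (Suc (Suc v)) \<longleftrightarrow> (\<exists>y zs. ys = y # zs \<and> 2 \<le> y \<and> zs \<in> GS (Suc v) (y - 1))"
proof
  assume A: "ys \<in> AW (Suc (Suc v))"
  then obtain y zs where ys: "ys = y # zs" and lz: "length zs = Suc v"
    unfolding AW_def by (cases ys) auto
  from A have s: "y + sum_list zs \<le> Suc (Suc v)" and
    P: "\<And>z. 1 \<le> z \<Longrightarrow> z < Suc (Suc v) \<Longrightarrow> z < sum_list (take z ys)"
    unfolding AW_def ys by auto
  have y2: "2 \<le> y" using P[of 1] by (simp add: ys)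
  have P': "z < y - 1 + sum_list (take z zs)" if "z < length zs" for z
  proof (cases z)
    case 0 then show ?thesis using y2 by simp
  next
    case (Suc z')
    have "Suc z < sum_list (take (Suc z) ys)" using P[of "Suc z"] that lz by simp
    then show ?thesis using y2 by (simp add: ys)
  qed
  have "Suc v < sum_list (take (Suc v) ys)" using P[of "Suc v"] by simp
  moreover have "sum_list (take v zs) \<le> sum_list zs"
    by (metis append_take_drop_id le_add1 sum_list_append)
  ultimately have "Suc v < y + sum_list zs" using lz by (simp add: ys)
  then have eq: "y - 1 + sum_list zs = length zs" using s lz y2 by simp
  have "good (y - 1) zs" using P' eq by (simp add: good_char)
  then show "\<exists>y zs. ys = y # zs \<and> 2 \<le> y \<and> zs \<in> GS (Suc v) (y - 1)"
    using ys y2 lz by (auto simp: GS_def)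
next
  assume "\<exists>y zs. ys = y # zs \<and> 2 \<le> y \<and> zs \<in> GS (Suc v) (y - 1)"
  then obtain y zs where ys: "ys = y # zs" and y2: "2 \<le> y" and lz: "length zs = Suc v"
    and g: "good (y - 1) zs" by (auto simp: GS_def)
  from g have P': "\<And>z. z < length zs \<Longrightarrow> z < y - 1 + sum_list (take z zs)"
    and eq: "y - 1 + sum_list zs = length zs" by (auto simp: good_char)
  have "z < sum_list (take z ys)" if "1 \<le> z" "z < Suc (Suc v)" for z
  proof -
    define z' where "z' = z - 1"
    have z: "z = Suc z'" using that(1) by (simp add: z'_def)
    have "z' < length zs" using that z lz by simp
    then have "z' < y - 1 + sum_list (take z' zs)" by (rule P')
    then show ?thesis using y2 by (simp add: ys z)
  qed
  moreover have "sum_list ys \<le> Suc (Suc v)" using eq lz y2 by (simp add: ys)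
  ultimately show "ys \<in> AW (Suc (Suc v))" using lz by (auto simp: AW_def ys)
qed

lemma AW_eq: "AW (Suc (Suc v)) = (\<Union>j\<le>v. Cons (j+2) ` GS (Suc v) (j+1))"
proof (intro equalityI subsetI)
  fix ys assume "ys \<in> AW (Suc (Suc v))"
  then obtain y zs where ys: "ys = y # zs" "2 \<le> y" "zs \<in> GS (Suc v) (y - 1)"
    using AW_char by blast
  then have "y - 1 + sum_list zs = Suc v" by (auto simp: GS_def dest: good_sum)
  then have "y - 2 \<le> v" using ys(2) by simp
  moreover have "y - 2 + 1 = y - 1" "y - 2 + 2 = y" using ys(2) by auto
  then have "ys = (y - 2 + 2) # zs" "zs \<in> GS (Suc v) (y - 2 + 1)" using ys by auto
  ultimately show "ys \<in> (\<Union>j\<le>v. Cons (j+2) ` GS (Suc v) (j+1))" by blast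
next
  fix ys assume "ys \<in> (\<Union>j\<le>v. Cons (j+2) ` GS (Suc v) (j+1))"
  then obtain j zs where "ys = (j+2) # zs" "zs \<in> GS (Suc v) (j+1)" by blast
  then show "ys \<in> AW (Suc (Suc v))" unfolding AW_char by auto
qed

lemma finite_AW: "finite (AW w)"
  by (rule finite_subset[OF _ finite_lists_bounded[of w w]]) (auto simp: AW_def)

lemma sum_Cons_Union_gen:
  assumes "finite I" "\<And>y. finite (A y)"
  shows "(\<Sum>ys\<in>(\<Union>y\<in>I. Cons y ` A y). f ys) = (\<Sum>y\<in>I. \<Sum>zs\<in>A y. f (y # zs))"
proof -
  have "(\<Sum>ys\<in>(\<Union>y\<in>I. Cons y ` A y). f ys) = (\<Sum>y\<in>I. \<Sum>ys\<in>Cons y ` A y. f ys)"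
    by (rule sum.UNION_disjoint) (use assms in auto)
  also have "\<dots> = (\<Sum>y\<in>I. \<Sum>zs\<in>A y. f (y # zs))"
    by (rule sum.cong[OF refl]) (simp add: sum.reindex)
  finally show ?thesis .
qed

lemma sum_Cons_Union_gen2:
  assumes "finite I" "\<And>y. finite (A y)" "inj_on g I"
  shows "(\<Sum>ys\<in>(\<Union>y\<in>I. Cons (g y) ` A y). f ys) = (\<Sum>y\<in>I. \<Sum>zs\<in>A y. f (g y # zs))"
proof -
  have "(\<Sum>ys\<in>(\<Union>y\<in>I. Cons (g y) ` A y). f ys) = (\<Sum>y\<in>I. \<Sum>ys\<in>Cons (g y) ` A y. f ys)"
    by (rule sum.UNION_disjoint) (use assms in \<open>auto dest: inj_onD\<close>)
  also have "\<dots> = (\<Sum>y\<in>I. \<Sum>zs\<in>A y. f (g y # zs))"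
    by (rule sum.cong[OF refl]) (simp add: sum.reindex)
  finally show ?thesis .
qed



locale pois = prob_space M for M :: "'a measure" +
  fixes Y :: "nat \<Rightarrow> 'a \<Rightarrow> nat" and lam :: real
  assumes lam0: "0 \<le> lam" and lam1: "lam < 1"
    and ind: "indep_vars (\<lambda>_. count_space UNIV) Y {1..}"
    and dist: "\<And>i k. 1 \<le> i \<Longrightarrow> prob {\<omega> \<in> space M. Y i \<omega> = k} = lam ^ k / fact k * exp (- lam)"
begin

definition p :: "nat \<Rightarrow> real" where "p k = lam ^ k / fact k * exp (- lam)"
definition Ylist :: "nat \<Rightarrow> 'a \<Rightarrow> nat list" where "Ylist n \<omega> = map (\<lambda>i. Y (Suc i) \<omega>) [0..<n]"
definition pr :: "nat list \<Rightarrow> real" where "pr ys = prod_list (map p ys)"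
definition cyl :: "nat list \<Rightarrow> 'a set" where "cyl ys = {\<omega> \<in> space M. Ylist (length ys) \<omega> = ys}"

lemma rv: "1 \<le> i \<Longrightarrow> Y i \<in> measurable M (count_space UNIV)"
  using ind unfolding indep_vars_def by auto

lemma ev_Y: "1 \<le> i \<Longrightarrow> {\<omega> \<in> space M. Y i \<omega> = k} \<in> events"
proof -
  assume i: "1 \<le> i"
  have "Y i -` {k} \<inter> space M \<in> events" by (rule measurable_sets[OF rv[OF i]]) simp
  moreover have "Y i -` {k} \<inter> space M = {\<omega> \<in> space M. Y i \<omega> = k}" by auto
  ultimately show ?thesis by simp
qed

lemma length_Ylist[simp]: "length (Ylist n \<omega>) = n"
  by (simp add: Ylist_def)

lemma nth_Ylist[simp]: "i < n \<Longrightarrow> Ylist n \<omega> ! i = Y (Suc i) \<omega>"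
  by (simp add: Ylist_def)

lemma take_Ylist: "m \<le> n \<Longrightarrow> take m (Ylist n \<omega>) = Ylist m \<omega>"
  by (simp add: Ylist_def take_map)

lemma Ylist_eq_iff: "Ylist n \<omega> = ys \<longleftrightarrow> length ys = n \<and> (\<forall>i<n. Y (Suc i) \<omega> = ys ! i)"
proof
  assume "Ylist n \<omega> = ys" then show "length ys = n \<and> (\<forall>i<n. Y (Suc i) \<omega> = ys ! i)"
    by (metis length_Ylist nth_Ylist)
next
  assume "length ys = n \<and> (\<forall>i<n. Y (Suc i) \<omega> = ys ! i)"
  then show "Ylist n \<omega> = ys" by (intro nth_equalityI) auto
qed

lemma cyl_eq: "cyl ys = space M \<inter> (\<Inter>i<length ys. {\<omega> \<in> space M. Y (Suc i) \<omega> = ys ! i})"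
  unfolding cyl_def Ylist_eq_iff by blast

lemma ev_cyl: "cyl ys \<in> events"
proof (cases "ys = []")
  case True
  then have "cyl ys = space M" by (auto simp: cyl_def Ylist_def)
  then show ?thesis by simp
next
  case False
  have "cyl ys = (\<Inter>i<length ys. {\<omega> \<in> space M. Y (Suc i) \<omega> = ys ! i})"
    unfolding cyl_eq using False by auto
  also have "\<dots> \<in> events"
    by (rule sets.finite_INT) (use False in \<open>auto intro!: ev_Y\<close>)
  finally show ?thesis .
qed

lemma prob_cyl: "prob (cyl ys) = pr ys"
proof (cases "ys = []")
  case True
  then have "cyl ys = space M" by (auto simp: cyl_def Ylist_def)
  then show ?thesis using True by (simp add: prob_space pr_def)
next
  case False
  define n where "n = length ys"
  define A where "A i = {ys ! (i - 1)}" for i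
  have J: "Suc ` {..<n} \<noteq> {}" "finite (Suc ` {..<n})" "Suc ` {..<n} \<subseteq> {1..}"
    using False by (auto simp: n_def)
  have "prob (\<Inter>i\<in>Suc ` {..<n}. Y i -` A i \<inter> space M) = (\<Prod>i\<in>Suc ` {..<n}. prob (Y i -` A i \<inter> space M))"
    by (rule indep_varsD[OF ind J]) simp
  moreover have "(\<Inter>i\<in>Suc ` {..<n}. Y i -` A i \<inter> space M) = cyl ys"
    using False unfolding cyl_def Ylist_eq_iff A_def n_def by auto
  moreover have "(\<Prod>i\<in>Suc ` {..<n}. prob (Y i -` A i \<inter> space M)) = (\<Prod>i<n. p (ys ! i))"
  proof -
    have "(\<Prod>i\<in>Suc ` {..<n}. prob (Y i -` A i \<inter> space M)) = (\<Prod>i<n. prob (Y (Suc i) -` A (Suc i) \<inter> space M))"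
      by (simp add: prod.reindex)
    also have "\<dots> = (\<Prod>i<n. p (ys ! i))"
    proof (rule prod.cong[OF refl])
      fix i
      have "Y (Suc i) -` A (Suc i) \<inter> space M = {\<omega> \<in> space M. Y (Suc i) \<omega> = ys ! i}" by (auto simp: A_def)
      then show "prob (Y (Suc i) -` A (Suc i) \<inter> space M) = p (ys ! i)" using dist[of "Suc i"] by (simp add: p_def)
    qed
    finally show ?thesis .
  qed
  moreover have "(\<Prod>i<n. p (ys ! i)) = pr ys"
    unfolding pr_def n_def by (subst prod.list_conv_set_nth) (simp add: atLeast0LessThan)
  ultimately show ?thesis by simp
qed

lemma pr_eq: "pr ys = lam ^ sum_list ys * exp (- lam) ^ length ys * wt ys"
proof (induction ys)
  case Nil then show ?case by (simp add: pr_def)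
next
  case (Cons y ys)
  have "pr (y#ys) = p y * pr ys" by (simp add: pr_def)
  also have "\<dots> = lam ^ y / fact y * exp (- lam) * (lam ^ sum_list ys * exp (- lam) ^ length ys * wt ys)"
    using Cons by (simp add: p_def)
  also have "\<dots> = lam ^ sum_list (y#ys) * exp (- lam) ^ length (y#ys) * wt (y#ys)"
    by (simp add: power_add)
  finally show ?case .
qed

lemma prob_lists:
  assumes "finite B" "\<And>ys. ys \<in> B \<Longrightarrow> length ys = n"
  shows "prob {\<omega> \<in> space M. Ylist n \<omega> \<in> B} = (\<Sum>ys\<in>B. pr ys)"
proof -
  have "{\<omega> \<in> space M. Ylist n \<omega> \<in> B} = (\<Union>ys\<in>B. cyl ys)"
    using assms(2) by (auto simp: cyl_def)
  moreover have "prob (\<Union>ys\<in>B. cyl ys) = (\<Sum>ys\<in>B. prob (cyl ys))"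
  proof (rule finite_measure_finite_Union[OF assms(1)])
    show "cyl ` B \<subseteq> events" using ev_cyl by auto
    show "disjoint_family_on cyl B" using assms(2) by (auto simp: disjoint_family_on_def cyl_def)
  qed
  ultimately show ?thesis by (simp add: prob_cyl)
qed

lemma ev_lists:
  assumes "finite B" "\<And>ys. ys \<in> B \<Longrightarrow> length ys = n"
  shows "{\<omega> \<in> space M. Ylist n \<omega> \<in> B} \<in> events"
proof -
  have "{\<omega> \<in> space M. Ylist n \<omega> \<in> B} = (\<Union>ys\<in>B. cyl ys)"
    using assms(2) by (auto simp: cyl_def)
  then show ?thesis using assms(1) ev_cyl by auto
qed

definition SS :: "nat \<Rightarrow> 'a \<Rightarrow> nat" where "SS n \<omega> = sum_list (Ylist n \<omega>)"

lemma Sle_eq: "{\<omega> \<in> space M. SS n \<omega> \<le> K} = {\<omega> \<in> space M. Ylist n \<omega> \<in> {ys. length ys = n \<and> sum_list ys \<le> K}}"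
  by (auto simp: SS_def)

lemma ev_Sle: "{\<omega> \<in> space M. SS n \<omega> \<le> K} \<in> events"
  unfolding Sle_eq by (rule ev_lists[OF finite_lists_bounded]) auto

lemma prob_Sle: "prob {\<omega> \<in> space M. SS n \<omega> \<le> K} = L lam n K"
proof -
  have "prob {\<omega> \<in> space M. SS n \<omega> \<le> K} = (\<Sum>ys\<in>{ys. length ys = n \<and> sum_list ys \<le> K}. pr ys)"
    unfolding Sle_eq by (rule prob_lists[OF finite_lists_bounded]) auto
  also have "{ys. length ys = n \<and> sum_list ys \<le> K} = (\<Union>k\<le>K. LS n k)"
    by (auto simp: LS_def)
  also have "(\<Sum>ys\<in>(\<Union>k\<le>K. LS n k). pr ys) = (\<Sum>k\<le>K. \<Sum>ys\<in>LS n k. pr ys)"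
    by (rule sum.UNION_disjoint) (use finite_LS in \<open>auto simp: LS_def\<close>)
  also have "\<dots> = (\<Sum>k\<le>K. lam ^ k * exp (- lam) ^ n * (real n ^ k / fact k))"
  proof (rule sum.cong[OF refl])
    fix k
    have "(\<Sum>ys\<in>LS n k. pr ys) = (\<Sum>ys\<in>LS n k. lam ^ k * exp (- lam) ^ n * wt ys)"
      by (rule sum.cong[OF refl]) (simp add: pr_eq LS_def)
    also have "\<dots> = lam ^ k * exp (- lam) ^ n * (real n ^ k / fact k)"
      by (simp add: sum_distrib_left[symmetric] multinomial)
    finally show "(\<Sum>ys\<in>LS n k. pr ys) = lam ^ k * exp (- lam) ^ n * (real n ^ k / fact k)" .
  qed
  also have "\<dots> = L lam n K"
    unfolding L_def
    by (rule sum.cong[OF refl]) (simp add: exp_of_nat_mult[symmetric] power_mult_distrib field_simps)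
  finally show ?thesis .
qed

definition Tev :: "nat \<Rightarrow> nat \<Rightarrow> 'a set" where
  "Tev h m = {\<omega> \<in> space M. good h (Ylist m \<omega>)}"

lemma Tev_eq: "Tev h m = {\<omega> \<in> space M. Ylist m \<omega> \<in> GS m h}"
  by (auto simp: Tev_def GS_def)

lemma ev_Tev: "Tev h m \<in> events"
  unfolding Tev_eq by (rule ev_lists[OF finite_GS]) (auto simp: GS_def)

lemma sum_GS: "(\<Sum>ys\<in>GS m h. pr ys) = lam ^ (m - h) * exp (- lam) ^ m * NN m h"
proof -
  have "(\<Sum>ys\<in>GS m h. pr ys) = (\<Sum>ys\<in>GS m h. lam ^ (m - h) * exp (- lam) ^ m * wt ys)"
  proof (rule sum.cong[OF refl])
    fix ys assume "ys \<in> GS m h"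
    then have "length ys = m" "h + sum_list ys = m" by (auto simp: GS_def dest: good_sum)
    then have "sum_list ys = m - h" "length ys = m" by simp_all
    then show "pr ys = lam ^ (m - h) * exp (- lam) ^ m * wt ys" by (simp add: pr_eq)
  qed
  also have "\<dots> = lam ^ (m - h) * exp (- lam) ^ m * NN m h"
    by (simp add: NN_def sum_distrib_left)
  finally show ?thesis .
qed

lemma prob_Tev: "prob (Tev h m) = lam ^ (m - h) * exp (- lam) ^ m * NN m h"
proof -
  have "prob (Tev h m) = (\<Sum>ys\<in>GS m h. pr ys)"
    unfolding Tev_eq by (rule prob_lists[OF finite_GS]) (auto simp: GS_def)
  also have "\<dots> = (\<Sum>ys\<in>GS m h. lam ^ (m - h) * exp (- lam) ^ m * wt ys)"
  proof (rule sum.cong[OF refl])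
    fix ys assume "ys \<in> GS m h"
    then have "length ys = m" "h + sum_list ys = m" by (auto simp: GS_def dest: good_sum)
    then have "sum_list ys = m - h" "length ys = m" by simp_all
    then show "pr ys = lam ^ (m - h) * exp (- lam) ^ m * wt ys" by (simp add: pr_eq)
  qed
  also have "\<dots> = lam ^ (m - h) * exp (- lam) ^ m * NN m h"
    by (simp add: NN_def sum_distrib_left)
  finally show ?thesis .
qed

lemma Tev_disj: "m < m' \<Longrightarrow> Tev h m \<inter> Tev h m' = {}"
proof (rule ccontr)
  assume mm: "m < m'" and "Tev h m \<inter> Tev h m' \<noteq> {}"
  then obtain \<omega> where g1: "good h (Ylist m \<omega>)" and g2: "good h (Ylist m' \<omega>)" by (auto simp: Tev_def)
  have "Ylist m' \<omega> = Ylist m \<omega> @ drop m (Ylist m' \<omega>)"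
    using take_Ylist[of m m' \<omega>] mm by (metis append_take_drop_id less_imp_le)
  with g1 g2 have "drop m (Ylist m' \<omega>) = []" using good_prefix by metis
  then show False using mm by simp
qed

lemma Tev_sums: assumes h: "0 < h"
  shows "(\<lambda>m. lam ^ (m - h) * exp (- lam) ^ m * NN m h) sums 1"
proof -
  define q where "q m = lam ^ (m - h) * exp (- lam) ^ m * NN m h" for m
  have partial: "(\<Sum>m\<le>n. q m) = prob (\<Union>m\<le>n. Tev h m)" for n
  proof -
    have "prob (\<Union>m\<le>n. Tev h m) = (\<Sum>m\<le>n. prob (Tev h m))"
    proof (rule finite_measure_finite_Union)
      show "disjoint_family_on (Tev h) {..n}"
        unfolding disjoint_family_on_def by (metis Tev_disj inf_commute linorder_neqE_nat)
    qed (auto simp: ev_Tev)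
    then show ?thesis by (simp add: q_def prob_Tev)
  qed
  have upper: "(\<Sum>m\<le>n. q m) \<le> 1" for n using partial by simp
  have lower: "L lam n (n - h) \<le> (\<Sum>m\<le>n. q m)" if "h \<le> n" for n
  proof -
    have "{\<omega> \<in> space M. SS n \<omega> \<le> n - h} \<subseteq> (\<Union>m\<le>n. Tev h m)"
    proof
      fix \<omega> assume w: "\<omega> \<in> {\<omega> \<in> space M. SS n \<omega> \<le> n - h}"
      from good_or_big[OF h, of "Ylist n \<omega>"]
      have "\<exists>m\<le>n. good h (Ylist m \<omega>)"
      proof
        assume "\<exists>m\<le>length (Ylist n \<omega>). good h (take m (Ylist n \<omega>))"
        then show ?thesis using take_Ylist by auto
      next
        assume "length (Ylist n \<omega>) < h + sum_list (Ylist n \<omega>)"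
        moreover have "sum_list (Ylist n \<omega>) \<le> n - h" using w by (simp add: SS_def)
        ultimately have False using that by simp
        then show ?thesis ..
      qed
      then show "\<omega> \<in> (\<Union>m\<le>n. Tev h m)" using w by (auto simp: Tev_def)
    qed
    then have "prob {\<omega> \<in> space M. SS n \<omega> \<le> n - h} \<le> prob (\<Union>m\<le>n. Tev h m)"
      by (intro finite_measure_mono) (auto simp: ev_Tev)
    then show ?thesis using partial prob_Sle by simp
  qed
  have "(\<lambda>n. \<Sum>m\<le>n. q m) \<longlonglongrightarrow> 1"
  proof (rule tendsto_sandwich[OF _ _ L_lim[OF lam0 lam1, of h] tendsto_const])
    show "\<forall>\<^sub>F n in sequentially. L lam n (n - h) \<le> (\<Sum>m\<le>n. q m)"
      using eventually_ge_at_top[of h] by (rule eventually_mono) (rule lower)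
    show "\<forall>\<^sub>F n in sequentially. (\<Sum>m\<le>n. q m) \<le> 1" using upper by simp
  qed
  then show ?thesis unfolding q_def[symmetric] by (simp add: sums_def_le)
qed

lemma SS_eq: "SS z \<omega> = (\<Sum>i=1..z. Y i \<omega>)"
proof -
  have "SS z \<omega> = (\<Sum>i\<in>set [0..<z]. Y (Suc i) \<omega>)"
    unfolding SS_def Ylist_def by (rule sum_set_upt_conv_sum_list_nat[symmetric])
  also have "\<dots> = (\<Sum>i<z. Y (Suc i) \<omega>)" by (simp add: atLeast0LessThan)
  also have "\<dots> = (\<Sum>i=1..z. Y i \<omega>)" by (simp add: sum.atLeast1_atMost_eq)
  finally show ?thesis .
qed

lemma SS_1: "SS 1 \<omega> = Y 1 \<omega>" "SS (Suc 0) \<omega> = Y (Suc 0) \<omega>" by (simp_all add: SS_eq)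

lemma SS_take: "z \<le> w \<Longrightarrow> SS z \<omega> = sum_list (take z (Ylist w \<omega>))"
  by (simp add: SS_def take_Ylist)

lemma stop_eq: "stop_time Y \<omega> = (if Y 1 \<omega> = 0 then 0 else LEAST z. 1 \<le> z \<and> SS z \<omega> \<le> z)"
  unfolding stop_time_def SS_eq ..

definition Nul :: "'a set" where
  "Nul = {\<omega> \<in> space M. Y 1 \<omega> \<noteq> 0 \<and> (\<forall>z. 1 \<le> z \<longrightarrow> z < SS z \<omega>)}"

definition cst :: nat where "cst = (LEAST z::nat. False)"

lemma stop_Nul: "\<omega> \<in> Nul \<Longrightarrow> stop_time Y \<omega> = cst"
proof -
  assume w: "\<omega> \<in> Nul"
  then have "\<not> (1 \<le> z \<and> SS z \<omega> \<le> z)" for z by (auto simp: Nul_def not_le)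
  then have "(\<lambda>z. 1 \<le> z \<and> SS z \<omega> \<le> z) = (\<lambda>z. False)" by blast
  then show ?thesis using w by (simp add: stop_eq Nul_def cst_def)
qed

lemma ev_Nul: "Nul \<in> events"
proof -
  have "Nul = (space M - {\<omega> \<in> space M. Y 1 \<omega> = 0}) \<inter> (\<Inter>z\<in>{1..}. space M - {\<omega> \<in> space M. SS z \<omega> \<le> z})"
    by (auto simp: Nul_def not_le)
  also have "\<dots> \<in> events"
    by (intro sets.Int sets.Diff sets.countable_INT ev_Y) (auto intro!: sets.Diff ev_Sle)
  finally show ?thesis .
qed

lemma prob_Nul: "prob Nul = 0"
proof -
  have le: "prob Nul \<le> 1 - L lam n (n - 0)" if "1 \<le> n" for n
  proof -
    have "Nul \<subseteq> space M - {\<omega> \<in> space M. SS n \<omega> \<le> n}"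
      using that by (auto simp: Nul_def not_le)
    then have "prob Nul \<le> prob (space M - {\<omega> \<in> space M. SS n \<omega> \<le> n})"
      by (intro finite_measure_mono) (auto intro: ev_Sle)
    also have "\<dots> = 1 - L lam n n" by (simp add: prob_compl ev_Sle prob_Sle)
    finally show ?thesis by simp
  qed
  have "(\<lambda>n. 1 - L lam n (n - 0)) \<longlonglongrightarrow> 1 - 1"
    by (intro tendsto_intros L_lim[OF lam0 lam1])
  then have "prob Nul \<le> 1 - 1"
    by (rule LIMSEQ_le_const) (use le in auto)
  then show ?thesis using measure_nonneg[of M Nul] by simp
qed

lemma stop_char:
  assumes w: "\<omega> \<in> space M" "\<omega> \<notin> Nul"
  shows "Y 1 \<omega> = 0 \<Longrightarrow> stop_time Y \<omega> = 0"
    and "Y 1 \<omega> \<noteq> 0 \<Longrightarrow> 1 \<le> stop_time Y \<omega>"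
    and "stop_time Y \<omega> = 1 \<longleftrightarrow> Y 1 \<omega> = 1"
    and "2 \<le> n \<Longrightarrow> stop_time Y \<omega> = n \<longleftrightarrow> Ylist n \<omega> \<in> AW n"
proof -
  define P where "P z = (1 \<le> z \<and> SS z \<omega> \<le> z)" for z
  have ex: "\<exists>z. P z" if "Y 1 \<omega> \<noteq> 0" using w that by (auto simp: Nul_def P_def not_less)
  have Pe: "P = (\<lambda>z. 1 \<le> z \<and> SS z \<omega> \<le> z)" by (simp add: P_def fun_eq_iff)
  have st: "stop_time Y \<omega> = (if Y 1 \<omega> = 0 then 0 else Least P)" unfolding stop_eq Pe ..
  show "Y 1 \<omega> = 0 \<Longrightarrow> stop_time Y \<omega> = 0" using st by simp
  show s1: "Y 1 \<omega> \<noteq> 0 \<Longrightarrow> 1 \<le> stop_time Y \<omega>"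
  proof -
    assume y: "Y 1 \<omega> \<noteq> 0"
    have "P (Least P)" by (rule LeastI_ex[OF ex[OF y]])
    then show ?thesis using st y unfolding P_def by simp
  qed
  show "stop_time Y \<omega> = 1 \<longleftrightarrow> Y 1 \<omega> = 1"
  proof
    assume a: "stop_time Y \<omega> = 1"
    then have "Y 1 \<omega> \<noteq> 0" using st by (metis zero_neq_one)
    then have "P (Least P)" using LeastI_ex[OF ex] by simp
    then show "Y 1 \<omega> = 1" using a st \<open>Y 1 \<omega> \<noteq> 0\<close> by (simp add: P_def SS_1)
  next
    assume a: "Y 1 \<omega> = 1"
    have "Least P = 1" by (rule Least_equality) (use a in \<open>auto simp: P_def SS_1\<close>)
    then show "stop_time Y \<omega> = 1" using st a by simp
  qed
  assume n: "2 \<le> n"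
  have SSt: "SS z \<omega> = sum_list (take z (Ylist n \<omega>))" if "z \<le> n" for z using SS_take[OF that] .
  show "stop_time Y \<omega> = n \<longleftrightarrow> Ylist n \<omega> \<in> AW n"
  proof
    assume a: "stop_time Y \<omega> = n"
    then have y1: "Y 1 \<omega> \<noteq> 0" using st n by (metis not_numeral_le_zero)
    then have ln: "Least P = n" using st a by simp
    have "P n" using LeastI_ex[OF ex[OF y1]] ln by simp
    then have Pn: "sum_list (Ylist n \<omega>) \<le> n" unfolding P_def SS_def by simp
    have lt: "z < sum_list (take z (Ylist n \<omega>))" if "1 \<le> z" "z < n" for z
    proof -
      have "\<not> P z" using not_less_Least[of z P] ln that by simp
      then have "z < SS z \<omega>" using that unfolding P_def by simp
      then show ?thesis using SSt[of z] that by simp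
    qed
    show "Ylist n \<omega> \<in> AW n" unfolding AW_def using Pn lt by simp
  next
    assume a: "Ylist n \<omega> \<in> AW n"
    then have Pn: "P n" using n unfolding AW_def P_def SS_def by simp
    have lt: "z < SS z \<omega>" if "1 \<le> z" "z < n" for z
    proof -
      have "z < sum_list (take z (Ylist n \<omega>))" using a that unfolding AW_def by simp
      then show ?thesis using SSt[of z] that by simp
    qed
    have "1 < Y 1 \<omega>" using lt[of 1] n by (simp add: SS_1)
    then have y1: "Y 1 \<omega> \<noteq> 0" by simp
    have "Least P = n"
    proof (rule Least_equality[of P n, OF Pn])
      fix z assume "P z"
      then have "1 \<le> z" "SS z \<omega> \<le> z" unfolding P_def by simp_all
      then show "n \<le> z" using lt[of z] by (meson leD not_le_imp_less)
    qed
    then show "stop_time Y \<omega> = n" using st y1 by simp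
  qed
qed

lemma prob_modNul:
  assumes "{\<omega> \<in> space M. Q (stop_time Y \<omega>)} - Nul = E" "E \<in> events"
  shows "{\<omega> \<in> space M. Q (stop_time Y \<omega>)} \<in> events"
    and "prob {\<omega> \<in> space M. Q (stop_time Y \<omega>)} = prob E"
proof -
  have Ns: "Nul \<subseteq> space M" by (auto simp: Nul_def)
  have eq: "{\<omega> \<in> space M. Q (stop_time Y \<omega>)} = E \<union> (if Q cst then Nul else {})"
    using assms(1) stop_Nul Ns by auto
  have dj: "E \<inter> (if Q cst then Nul else {}) = {}" using assms(1) by auto
  show "{\<omega> \<in> space M. Q (stop_time Y \<omega>)} \<in> events" unfolding eq using assms(2) ev_Nul by auto
  have "prob (E \<union> (if Q cst then Nul else {})) = prob E + prob (if Q cst then Nul else {})"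
    by (rule finite_measure_Union[OF assms(2) _ dj]) (use ev_Nul in auto)
  then show "prob {\<omega> \<in> space M. Q (stop_time Y \<omega>)} = prob E"
    unfolding eq using prob_Nul by auto
qed

lemma Nul_Y1: "\<omega> \<in> Nul \<Longrightarrow> 1 < Y 1 \<omega>"
  by (auto simp: Nul_def SS_1)

lemma set_W1: "{\<omega> \<in> space M. max (stop_time Y \<omega>) 1 = 1} - Nul = {\<omega> \<in> space M. Y 1 \<omega> \<le> 1}"
proof (intro equalityI subsetI)
  fix \<omega> assume a: "\<omega> \<in> {\<omega> \<in> space M. max (stop_time Y \<omega>) 1 = 1} - Nul"
  then have w: "\<omega> \<in> space M" "\<omega> \<notin> Nul" and m: "max (stop_time Y \<omega>) 1 = 1" by auto
  have "stop_time Y \<omega> \<le> 1" using m by simp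
  then have "stop_time Y \<omega> = 0 \<or> stop_time Y \<omega> = 1" by auto
  then have "Y 1 \<omega> \<le> 1"
  proof
    assume "stop_time Y \<omega> = 0"
    then have "Y 1 \<omega> = 0" using stop_char(2)[OF w] by (metis not_one_le_zero)
    then show ?thesis by simp
  next
    assume "stop_time Y \<omega> = 1"
    then show ?thesis using stop_char(3)[OF w] by simp
  qed
  then show "\<omega> \<in> {\<omega> \<in> space M. Y 1 \<omega> \<le> 1}" using w by simp
next
  fix \<omega> assume a: "\<omega> \<in> {\<omega> \<in> space M. Y 1 \<omega> \<le> 1}"
  then have w: "\<omega> \<in> space M" "\<omega> \<notin> Nul" using Nul_Y1 by force+
  have y: "Y 1 \<omega> \<le> 1" using a by simp
  have "stop_time Y \<omega> \<le> 1"
  proof (cases "Y 1 \<omega> = 0")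
    case True then show ?thesis using stop_char(1)[OF w] by simp
  next
    case False then have "Y 1 \<omega> = 1" using y by simp
    then show ?thesis using stop_char(3)[OF w] by simp
  qed
  then show "\<omega> \<in> {\<omega> \<in> space M. max (stop_time Y \<omega>) 1 = 1} - Nul" using w by simp
qed

lemma set_X0: "{\<omega> \<in> space M. stop_time Y \<omega> = 0} - Nul = {\<omega> \<in> space M. Y 1 \<omega> = 0}"
proof (intro equalityI subsetI)
  fix \<omega> assume a: "\<omega> \<in> {\<omega> \<in> space M. stop_time Y \<omega> = 0} - Nul"
  then have w: "\<omega> \<in> space M" "\<omega> \<notin> Nul" by auto
  then show "\<omega> \<in> {\<omega> \<in> space M. Y 1 \<omega> = 0}" using a stop_char(2)[OF w] by force
next
  fix \<omega> assume a: "\<omega> \<in> {\<omega> \<in> space M. Y 1 \<omega> = 0}"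
  then have w: "\<omega> \<in> space M" "\<omega> \<notin> Nul" using Nul_Y1 by force+
  then show "\<omega> \<in> {\<omega> \<in> space M. stop_time Y \<omega> = 0} - Nul" using a stop_char(1)[OF w] by simp
qed

lemma set_X1: "{\<omega> \<in> space M. stop_time Y \<omega> = 1} - Nul = {\<omega> \<in> space M. Y 1 \<omega> = 1}"
proof (intro equalityI subsetI)
  fix \<omega> assume a: "\<omega> \<in> {\<omega> \<in> space M. stop_time Y \<omega> = 1} - Nul"
  then have w: "\<omega> \<in> space M" "\<omega> \<notin> Nul" by auto
  then show "\<omega> \<in> {\<omega> \<in> space M. Y 1 \<omega> = 1}" using a stop_char(3)[OF w] by simp
next
  fix \<omega> assume a: "\<omega> \<in> {\<omega> \<in> space M. Y 1 \<omega> = 1}"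
  then have w: "\<omega> \<in> space M" "\<omega> \<notin> Nul" using Nul_Y1 by force+
  then show "\<omega> \<in> {\<omega> \<in> space M. stop_time Y \<omega> = 1} - Nul" using a stop_char(3)[OF w] by simp
qed

lemma AW_notNul: "1 \<le> w \<Longrightarrow> Ylist w \<omega> \<in> AW w \<Longrightarrow> \<omega> \<notin> Nul"
proof
  assume "1 \<le> w" "Ylist w \<omega> \<in> AW w" "\<omega> \<in> Nul"
  then have "SS w \<omega> \<le> w" "w < SS w \<omega>" by (auto simp: AW_def SS_def Nul_def)
  then show False by simp
qed

lemma set_Xw: "2 \<le> w \<Longrightarrow> {\<omega> \<in> space M. stop_time Y \<omega> = w} - Nul = {\<omega> \<in> space M. Ylist w \<omega> \<in> AW w}"
proof -
  assume w: "2 \<le> w"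
  then have "1 \<le> w" by simp
  then show ?thesis using stop_char(4)[OF _ _ w] AW_notNul by blast
qed

lemma set_Ww: "2 \<le> w \<Longrightarrow> {\<omega> \<in> space M. max (stop_time Y \<omega>) 1 = w} - Nul = {\<omega> \<in> space M. Ylist w \<omega> \<in> AW w}"
proof -
  assume w: "2 \<le> w"
  have "{\<omega> \<in> space M. max (stop_time Y \<omega>) 1 = w} = {\<omega> \<in> space M. stop_time Y \<omega> = w}"
    using w by (auto simp: max_def)
  then show ?thesis using set_Xw[OF w] by simp
qed

lemma ev_AW: "{\<omega> \<in> space M. Ylist w \<omega> \<in> AW w} \<in> events"
  by (rule ev_lists[OF finite_AW]) (auto simp: AW_def)

lemma prob_AW: "prob {\<omega> \<in> space M. Ylist (Suc (Suc v)) \<omega> \<in> AW (Suc (Suc v))}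
   = real (v+1)^v / (real (v+2) * fact v) * lam^(v+2) * exp (- real (v+2) * lam)"
proof -
  have "prob {\<omega> \<in> space M. Ylist (Suc (Suc v)) \<omega> \<in> AW (Suc (Suc v))} = (\<Sum>ys\<in>AW (Suc (Suc v)). pr ys)"
    by (rule prob_lists[OF finite_AW]) (auto simp: AW_def)
  also have "\<dots> = (\<Sum>j\<le>v. \<Sum>zs\<in>GS (Suc v) (j+1). pr ((j+2) # zs))"
    unfolding AW_eq by (rule sum_Cons_Union_gen2[where f=pr and g="\<lambda>j. j+2"]) (auto simp: finite_GS inj_on_def)
  also have "\<dots> = (\<Sum>j\<le>v. p (j+2) * (lam ^ (v - j) * exp (- lam) ^ Suc v * NNc (Suc v) (j+1)))"
    by (rule sum.cong[OF refl]) (simp add: pr_def sum_distrib_left[symmetric] sum_GS[unfolded pr_def] NN_closed)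
  also have "\<dots> = (\<Sum>j\<le>v. lam^(v+2) * exp (- lam)^(v+2) * (NNc (v+1) (j+1) / fact (j+2)))"
  proof (rule sum.cong[OF refl])
    fix j assume "j \<in> {..v}"
    then have e: "lam^j * lam^(v-j) = lam^v" by (simp add: power_add[symmetric])
    then show "p (j+2) * (lam ^ (v - j) * exp (- lam) ^ Suc v * NNc (Suc v) (j+1))
      = lam^(v+2) * exp (- lam)^(v+2) * (NNc (v+1) (j+1) / fact (j+2))"
      unfolding p_def using e by (simp add: field_simps)
  qed
  also have "\<dots> = lam^(v+2) * exp (- lam)^(v+2) * (real (v+1)^v / (real (v+2) * fact v))"
    by (simp only: sum_distrib_left[symmetric] AW_sum)
  also have "\<dots> = real (v+1)^v / (real (v+2) * fact v) * lam^(v+2) * exp (- real (v+2) * lam)"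
  proof -
    have "exp (- lam)^(v+2) = exp (real (v+2) * (- lam))"
      by (rule exp_of_nat_mult[symmetric])
    also have "real (v+2) * (- lam) = - real (v+2) * lam" by (simp only: mult_minus_left mult_minus_right)
    finally have "exp (- lam)^(v+2) = exp (- real (v+2) * lam)" .
    then show ?thesis by (simp add: mult_ac)
  qed
  finally show ?thesis .
qed

lemma integral_nat:
  fixes g :: "'a \<Rightarrow> nat"
  assumes ev: "\<And>n. {\<omega> \<in> space M. g \<omega> = n} \<in> events"
    and s: "(\<lambda>n. real n * prob {\<omega> \<in> space M. g \<omega> = n}) sums E"
  shows "integrable M (\<lambda>\<omega>. real (g \<omega>)) \<and> integral\<^sup>L M (\<lambda>\<omega>. real (g \<omega>)) = E"
proof -
  have gm: "g \<in> measurable M (count_space UNIV)"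
    unfolding measurable_count_space_eq2_countable
  proof safe
    fix a
    have "g -` {a} \<inter> space M = {\<omega> \<in> space M. g \<omega> = a}" by auto
    then show "g -` {a} \<inter> space M \<in> events" using ev by simp
  qed simp
  have fm: "(\<lambda>\<omega>. real (g \<omega>)) \<in> borel_measurable M"
    by (rule measurable_compose[OF gm]) simp
  have nn: "0 \<le> real n * prob {\<omega> \<in> space M. g \<omega> = n}" for n by simp
  have Es: "E = (\<Sum>n. real n * prob {\<omega> \<in> space M. g \<omega> = n})" using s by (simp add: sums_iff)
  have E0: "0 \<le> E" unfolding Es by (rule suminf_nonneg[OF sums_summable[OF s] nn])
  have pt: "ennreal (real (g \<omega>)) = (\<Sum>n. ennreal (real n) * indicator {\<omega> \<in> space M. g \<omega> = n} \<omega>)"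
    if "\<omega> \<in> space M" for \<omega>
  proof -
    have "(\<Sum>n. ennreal (real n) * indicator {\<omega> \<in> space M. g \<omega> = n} \<omega>)
        = (\<Sum>n\<in>{g \<omega>}. ennreal (real n) * indicator {\<omega> \<in> space M. g \<omega> = n} \<omega>)"
      by (rule suminf_finite) auto
    then show ?thesis using that by simp
  qed
  have "(\<integral>\<^sup>+\<omega>. ennreal (real (g \<omega>)) \<partial>M)
      = (\<integral>\<^sup>+\<omega>. (\<Sum>n. ennreal (real n) * indicator {\<omega> \<in> space M. g \<omega> = n} \<omega>) \<partial>M)"
    by (rule nn_integral_cong) (rule pt)
  also have "\<dots> = (\<Sum>n. \<integral>\<^sup>+\<omega>. ennreal (real n) * indicator {\<omega> \<in> space M. g \<omega> = n} \<omega> \<partial>M)"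
    by (rule nn_integral_suminf) (use ev in auto)
  also have "\<dots> = (\<Sum>n. ennreal (real n * prob {\<omega> \<in> space M. g \<omega> = n}))"
  proof (rule suminf_cong)
    fix n
    have "(\<integral>\<^sup>+\<omega>. ennreal (real n) * indicator {\<omega> \<in> space M. g \<omega> = n} \<omega> \<partial>M)
        = ennreal (real n) * emeasure M {\<omega> \<in> space M. g \<omega> = n}"
      by (rule nn_integral_cmult_indicator[OF ev])
    also have "emeasure M {\<omega> \<in> space M. g \<omega> = n} = ennreal (prob {\<omega> \<in> space M. g \<omega> = n})"
      by (rule emeasure_eq_measure)
    also have "ennreal (real n) * ennreal (prob {\<omega> \<in> space M. g \<omega> = n}) = ennreal (real n * prob {\<omega> \<in> space M. g \<omega> = n})"
      by (rule ennreal_mult[symmetric]) simp_all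
    finally show "(\<integral>\<^sup>+\<omega>. ennreal (real n) * indicator {\<omega> \<in> space M. g \<omega> = n} \<omega> \<partial>M)
        = ennreal (real n * prob {\<omega> \<in> space M. g \<omega> = n})" .
  qed
  also have "\<dots> = ennreal E"
    unfolding Es by (rule suminf_ennreal2[OF nn sums_summable[OF s]])
  finally have "(\<integral>\<^sup>+\<omega>. ennreal (real (g \<omega>)) \<partial>M) = ennreal E" .
  then have "has_bochner_integral M (\<lambda>\<omega>. real (g \<omega>)) E"
    by (intro has_bochner_integral_nn_integral fm E0) auto
  then show ?thesis by (simp add: has_bochner_integral_iff)
qed

lemma prob_W1: "prob {\<omega> \<in> space M. max (stop_time Y \<omega>) 1 = 1} = (lam + 1) * exp (- lam)"
   and ev_W1: "{\<omega> \<in> space M. max (stop_time Y \<omega>) 1 = 1} \<in> events"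
proof -
  have eq: "{\<omega> \<in> space M. Y 1 \<omega> \<le> 1} = {\<omega> \<in> space M. Y 1 \<omega> = 0} \<union> {\<omega> \<in> space M. Y 1 \<omega> = 1}" by auto
  have E: "{\<omega> \<in> space M. Y 1 \<omega> \<le> 1} \<in> events" unfolding eq by (intro sets.Un ev_Y) auto
  show "{\<omega> \<in> space M. max (stop_time Y \<omega>) 1 = 1} \<in> events" by (rule prob_modNul(1)[OF set_W1 E])
  have "prob {\<omega> \<in> space M. max (stop_time Y \<omega>) 1 = 1} = prob {\<omega> \<in> space M. Y 1 \<omega> \<le> 1}"
    by (rule prob_modNul(2)[OF set_W1 E])
  also have "\<dots> = prob {\<omega> \<in> space M. Y 1 \<omega> = 0} + prob {\<omega> \<in> space M. Y 1 \<omega> = 1}"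
    unfolding eq by (rule finite_measure_Union) (auto intro: ev_Y)
  also have "\<dots> = (lam + 1) * exp (- lam)" using dist[of 1 0] dist[of 1 1] by (simp add: field_simps)
  finally show "prob {\<omega> \<in> space M. max (stop_time Y \<omega>) 1 = 1} = (lam + 1) * exp (- lam)" .
qed

lemma prob_Ww: assumes w: "2 \<le> w"
  shows "prob {\<omega> \<in> space M. max (stop_time Y \<omega>) 1 = w}
     = real (w - 1) ^ (w - 2) / (real w * fact (w - 2)) * lam ^ w * exp (- real w * lam)"
    and "{\<omega> \<in> space M. max (stop_time Y \<omega>) 1 = w} \<in> events"
proof -
  obtain v where v: "w = Suc (Suc v)" using w by (metis add_2_eq_Suc le_Suc_ex)
  show "{\<omega> \<in> space M. max (stop_time Y \<omega>) 1 = w} \<in> events" by (rule prob_modNul(1)[OF set_Ww[OF w] ev_AW])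
  have "prob {\<omega> \<in> space M. max (stop_time Y \<omega>) 1 = w} = prob {\<omega> \<in> space M. Ylist w \<omega> \<in> AW w}"
    by (rule prob_modNul(2)[OF set_Ww[OF w] ev_AW])
  also have "\<dots> = real (v+1)^v / (real (v+2) * fact v) * lam^(v+2) * exp (- real (v+2) * lam)"
    unfolding v by (rule prob_AW)
  finally show "prob {\<omega> \<in> space M. max (stop_time Y \<omega>) 1 = w}
     = real (w - 1) ^ (w - 2) / (real w * fact (w - 2)) * lam ^ w * exp (- real w * lam)"
    by (simp add: v)
qed

lemma prob_X0: "prob {\<omega> \<in> space M. stop_time Y \<omega> = 0} = exp (- lam)"
  and ev_X0: "{\<omega> \<in> space M. stop_time Y \<omega> = 0} \<in> events"
proof -
  show "{\<omega> \<in> space M. stop_time Y \<omega> = 0} \<in> events" by (rule prob_modNul(1)[OF set_X0 ev_Y]) simp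
  have "prob {\<omega> \<in> space M. stop_time Y \<omega> = 0} = prob {\<omega> \<in> space M. Y 1 \<omega> = 0}"
    by (rule prob_modNul(2)[OF set_X0 ev_Y]) simp
  then show "prob {\<omega> \<in> space M. stop_time Y \<omega> = 0} = exp (- lam)" using dist[of 1 0] by simp
qed

lemma ev_X: "{\<omega> \<in> space M. stop_time Y \<omega> = n} \<in> events"
proof -
  consider "n = 0" | "n = 1" | "2 \<le> n" by linarith
  then show ?thesis
  proof cases
    case 1 then show ?thesis using ev_X0 by simp
  next
    case 2 then show ?thesis using prob_modNul(1)[OF set_X1 ev_Y] by simp
  next
    case 3 then show ?thesis using prob_modNul(1)[OF set_Xw[OF 3] ev_AW] by simp
  qed
qed

lemma ev_W: "{\<omega> \<in> space M. max (stop_time Y \<omega>) 1 = n} \<in> events"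
proof -
  consider "n = 0" | "n = 1" | "2 \<le> n" by linarith
  then show ?thesis
  proof cases
    case 1
    then have "{\<omega> \<in> space M. max (stop_time Y \<omega>) 1 = n} = {}" by auto
    then show ?thesis by (metis sets.empty_sets)
  next
    case 2 then show ?thesis using ev_W1 by simp
  next
    case 3 then show ?thesis using prob_Ww(2)[OF 3] by simp
  qed
qed

lemma NNc_nonneg: "0 \<le> NNc m h"
  by (simp add: NNc_def)

lemma col_sums:
  assumes lp: "0 < lam" and h: "0 < h"
  shows "(\<lambda>m. NNc m h * (lam * exp (- lam))^m) sums lam^h"
proof -
  have "(\<lambda>m. lam^h * (lam ^ (m - h) * exp (- lam) ^ m * NN m h)) sums (lam^h * 1)"
    by (rule sums_mult[OF Tev_sums[OF h]])
  moreover have "lam^h * (lam ^ (m - h) * exp (- lam) ^ m * NN m h) = NNc m h * (lam * exp (- lam))^m" for m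
  proof (cases "m < h")
    case True
    then show ?thesis using h by (simp add: NN_closed NNc_def)
  next
    case False
    then have "lam^h * lam^(m-h) = lam^m" by (simp add: power_add[symmetric])
    then show ?thesis by (simp add: NN_closed power_mult_distrib mult_ac)
  qed
  ultimately show ?thesis by simp
qed

lemma A_sums:
  assumes lp: "0 < lam"
  shows "(\<lambda>m. real (Suc m) ^ Suc m / fact (Suc m) * (lam * exp (- lam))^Suc m) sums (lam / (1 - lam))"
proof -
  define x where "x = lam * exp (- lam)"
  have x0: "0 \<le> x" using lp by (simp add: x_def)
  define a where "a m h = (if h = 0 then 0 else NNc m h * x^m)" for m h
  define c where "c h = (if h = 0 then 0 else lam^h)" for h :: nat
  have cs: "c sums (1 / (1 - lam) - 1)"
  proof -
    have g: "(\<lambda>h. lam^h) sums (1 / (1 - lam))" by (rule geometric_sums) (use lp lam1 in simp)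
    have "(\<lambda>h. lam^h - (if h = 0 then 1 else 0)) sums (1 / (1 - lam) - 1)"
      by (rule sums_diff[OF g]) (rule sums_single[of 0 "\<lambda>_. 1::real", simplified])
    moreover have "c = (\<lambda>h. lam^h - (if h = 0 then 1 else 0))" by (auto simp: c_def fun_eq_iff)
    ultimately show ?thesis by simp
  qed
  have ds: "(\<lambda>m. \<Sum>h\<le>m. a m h) sums suminf c"
  proof (rule double_sum)
    show "0 \<le> a m h" for m h using x0 by (simp add: a_def NNc_nonneg)
    show "a m h = 0" if "m < h" for m h using that by (simp add: a_def NNc_def)
    show "(\<lambda>m. a m h) sums c h" for h
    proof (cases "h = 0")
      case True then show ?thesis by (simp add: a_def c_def)
    next
      case False then show ?thesis using col_sums[OF lp, of h] by (simp add: a_def c_def x_def)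
    qed
    show "summable c" using cs by (rule sums_summable)
  qed
  have "suminf c = lam / (1 - lam)" using cs lam1 by (simp add: sums_iff field_simps)
  then have ds': "(\<lambda>m. \<Sum>h\<le>m. a m h) sums (lam / (1 - lam))" using ds by simp
  have A0: "(\<Sum>h\<le>0. a 0 h) = 0" by (simp add: a_def)
  have "(\<lambda>m. \<Sum>h\<le>Suc m. a (Suc m) h) sums (lam / (1 - lam))"
    using ds' sums_Suc_iff[of "\<lambda>m. \<Sum>h\<le>m. a m h"] A0 by simp
  moreover have "(\<Sum>h\<le>Suc m. a (Suc m) h) = real (Suc m) ^ Suc m / fact (Suc m) * x^Suc m" for m
  proof -
    have "(\<Sum>h\<le>Suc m. a (Suc m) h) = (\<Sum>h\<in>{1..Suc m}. NNc (Suc m) h * x^Suc m)"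
      by (rule sum.mono_neutral_cong_right) (auto simp: a_def)
    also have "\<dots> = (\<Sum>h\<in>{1..Suc m}. NNc (Suc m) h) * x^Suc m" by (simp only: sum_distrib_right)
    also have "\<dots> = real (Suc m) ^ Suc m / fact (Suc m) * x^Suc m" using tele[of "Suc m"] by simp
    finally show ?thesis .
  qed
  ultimately show ?thesis by (simp add: x_def)
qed

lemma W_series:
  assumes lp: "0 < lam"
  shows "(\<lambda>n. real n * prob {\<omega> \<in> space M. max (stop_time Y \<omega>) 1 = n}) sums (exp (- lam) / (1 - lam))"
proof -
  define f where "f n = real n * prob {\<omega> \<in> space M. max (stop_time Y \<omega>) 1 = n}" for n
  define x where "x = lam * exp (- lam)"
  have f0: "f 0 = 0" by (simp add: f_def)
  have f1: "f 1 = (lam + 1) * exp (- lam)" unfolding f_def prob_W1 by simp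
  have f2: "f (Suc (Suc v)) = x * (real (Suc v) ^ Suc v / fact (Suc v) * x^Suc v)" for v
  proof -
    have "f (Suc (Suc v)) = real (Suc (Suc v)) * (real (v+1)^v / (real (v+2) * fact v) * lam^(v+2) * exp (- real (v+2) * lam))"
      unfolding f_def using prob_Ww(1)[of "Suc (Suc v)"] by simp
    also have "\<dots> = real (v+1)^v / fact v * (lam^(v+2) * exp (- real (v+2) * lam))" by simp
    also have "lam^(v+2) * exp (- real (v+2) * lam) = x^(v+2)"
    proof -
      have "exp (- lam)^(v+2) = exp (real (v+2) * (- lam))" by (rule exp_of_nat_mult[symmetric])
      also have "real (v+2) * (- lam) = - real (v+2) * lam" by (simp only: mult_minus_left mult_minus_right)
      finally show ?thesis by (simp add: x_def power_mult_distrib)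
    qed
    also have "real (v+1)^v / fact v * x^(v+2) = x * (real (Suc v) ^ Suc v / fact (Suc v) * x^Suc v)"
      by (simp add: fact_Suc field_simps del: of_nat_Suc)
    finally show ?thesis .
  qed
  have "(\<lambda>v. f (Suc (Suc v))) sums (x * (lam / (1 - lam)))"
    unfolding f2 by (rule sums_mult[OF A_sums[OF lp, folded x_def]])
  then have "(\<lambda>n. f (Suc n)) sums (x * (lam / (1 - lam)) + f 1)"
    using sums_Suc_iff[of "\<lambda>n. f (Suc n)"] by simp
  then have "f sums (x * (lam / (1 - lam)) + f 1 + f 0)"
    using sums_Suc_iff[of f] by simp
  moreover have "x * (lam / (1 - lam)) + f 1 + f 0 = exp (- lam) / (1 - lam)"
  proof -
    have "f (Suc 0) = (lam + 1) * exp (- lam)" using f1 by simp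
    then show ?thesis using lam1 by (simp add: f0 f1 x_def field_simps)
  qed
  ultimately have "f sums (exp (- lam) / (1 - lam))" by simp
  moreover have "f = (\<lambda>n. real n * prob {\<omega> \<in> space M. max (stop_time Y \<omega>) 1 = n})"
    by (rule ext) (simp only: f_def)
  ultimately show ?thesis by simp
qed

lemma prob_X1: "prob {\<omega> \<in> space M. stop_time Y \<omega> = 1} = lam * exp (- lam)"
proof -
  have "prob {\<omega> \<in> space M. stop_time Y \<omega> = 1} = prob {\<omega> \<in> space M. Y 1 \<omega> = 1}"
    by (rule prob_modNul(2)[OF set_X1 ev_Y]) simp
  then show ?thesis using dist[of 1 1] by simp
qed

lemma X_series:
  assumes lp: "0 < lam"
  shows "(\<lambda>n. real n * prob {\<omega> \<in> space M. stop_time Y \<omega> = n}) sums (exp (- lam) / (1 - lam) - exp (- lam))"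
proof -
  have "(\<lambda>n. real n * prob {\<omega> \<in> space M. max (stop_time Y \<omega>) 1 = n} - (if n = 1 then exp (- lam) else 0))
     sums (exp (- lam) / (1 - lam) - exp (- lam))"
    by (rule sums_diff[OF W_series[OF lp]]) (use sums_single[of 1 "\<lambda>_. exp (- lam)"] in simp)
  moreover have "real n * prob {\<omega> \<in> space M. max (stop_time Y \<omega>) 1 = n} - (if n = 1 then exp (- lam) else 0)
      = real n * prob {\<omega> \<in> space M. stop_time Y \<omega> = n}" for n
  proof -
    consider "n = 0" | "n = 1" | "2 \<le> n" by linarith
    then show ?thesis
    proof cases
      case 1 then show ?thesis by simp
    next
      case 2 then show ?thesis using prob_W1 prob_X1 by (simp add: field_simps)
    next
      case 3
      then have "{\<omega> \<in> space M. max (stop_time Y \<omega>) 1 = n} = {\<omega> \<in> space M. stop_time Y \<omega> = n}"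
        by (auto simp: max_def)
      then show ?thesis using 3 by simp
    qed
  qed
  ultimately show ?thesis by simp
qed

lemma main:
  shows "prob {\<omega> \<in> space M. max (stop_time Y \<omega>) 1 = 1} = (lam + 1) * exp (- lam)
    \<and> (\<forall>w::nat. 2 \<le> w \<longrightarrow>
          prob {\<omega> \<in> space M. max (stop_time Y \<omega>) 1 = w}
          = real (w - 1) ^ (w - 2) / (real w * fact (w - 2)) * lam ^ w * exp (- real w * lam))
    \<and> (0 < lam \<longrightarrow>
          integrable M (\<lambda>\<omega>. real (max (stop_time Y \<omega>) 1))
        \<and> integrable M (\<lambda>\<omega>. real (stop_time Y \<omega>))
        \<and> integral\<^sup>L M (\<lambda>\<omega>. real (max (stop_time Y \<omega>) 1))
            = integral\<^sup>L M (\<lambda>\<omega>. real (stop_time Y \<omega>)) / lam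
        \<and> integral\<^sup>L M (\<lambda>\<omega>. real (max (stop_time Y \<omega>) 1)) = exp (- lam) / (1 - lam))"
proof (intro conjI allI impI)
  show "prob {\<omega> \<in> space M. max (stop_time Y \<omega>) 1 = 1} = (lam + 1) * exp (- lam)" by (rule prob_W1)
  show "prob {\<omega> \<in> space M. max (stop_time Y \<omega>) 1 = w}
          = real (w - 1) ^ (w - 2) / (real w * fact (w - 2)) * lam ^ w * exp (- real w * lam)"
    if "2 \<le> w" for w using prob_Ww(1)[OF that] .
  assume lp: "0 < lam"
  have W: "integrable M (\<lambda>\<omega>. real (max (stop_time Y \<omega>) 1)) \<and>
      integral\<^sup>L M (\<lambda>\<omega>. real (max (stop_time Y \<omega>) 1)) = exp (- lam) / (1 - lam)"
    by (rule integral_nat[OF ev_W W_series[OF lp]])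
  have X: "integrable M (\<lambda>\<omega>. real (stop_time Y \<omega>)) \<and>
      integral\<^sup>L M (\<lambda>\<omega>. real (stop_time Y \<omega>)) = exp (- lam) / (1 - lam) - exp (- lam)"
    by (rule integral_nat[OF ev_X X_series[OF lp]])
  show "integrable M (\<lambda>\<omega>. real (max (stop_time Y \<omega>) 1))" using W by simp
  show "integrable M (\<lambda>\<omega>. real (stop_time Y \<omega>))" using X by simp
  show "integral\<^sup>L M (\<lambda>\<omega>. real (max (stop_time Y \<omega>) 1)) = exp (- lam) / (1 - lam)" using W by simp
  show "integral\<^sup>L M (\<lambda>\<omega>. real (max (stop_time Y \<omega>) 1))
            = integral\<^sup>L M (\<lambda>\<omega>. real (stop_time Y \<omega>)) / lam"
  proof -
    have eW: "integral\<^sup>L M (\<lambda>\<omega>. real (max (stop_time Y \<omega>) 1)) = exp (- lam) / (1 - lam)" using W by simp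
    have eX: "integral\<^sup>L M (\<lambda>\<omega>. real (stop_time Y \<omega>)) = exp (- lam) / (1 - lam) - exp (- lam)" using X by simp
    have "exp (- lam) / (1 - lam) = (exp (- lam) / (1 - lam) - exp (- lam)) / lam"
      using lp lam1 by (simp add: field_simps)
    then show ?thesis unfolding eW eX .
  qed
qed

end

theorem corollary2:
  fixes M :: "'a measure" and Y :: "nat \<Rightarrow> 'a \<Rightarrow> nat" and lam :: real
  assumes "prob_space M"
    and "0 \<le> lam" and "lam < 1"
    and "prob_space.indep_vars M (\<lambda>_. count_space UNIV) Y {1..}"
    and "\<And>i k. 1 \<le> i \<Longrightarrow>
           measure M {\<omega> \<in> space M. Y i \<omega> = k} = lam ^ k / fact k * exp (- lam)"
  shows "measure M {\<omega> \<in> space M. max (stop_time Y \<omega>) 1 = 1} = (lam + 1) * exp (- lam)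
    \<and> (\<forall>w::nat. 2 \<le> w \<longrightarrow>
          measure M {\<omega> \<in> space M. max (stop_time Y \<omega>) 1 = w}
          = real (w - 1) ^ (w - 2) / (real w * fact (w - 2)) * lam ^ w * exp (- real w * lam))
    \<and> (0 < lam \<longrightarrow>
          integrable M (\<lambda>\<omega>. real (max (stop_time Y \<omega>) 1))
        \<and> integrable M (\<lambda>\<omega>. real (stop_time Y \<omega>))
        \<and> integral\<^sup>L M (\<lambda>\<omega>. real (max (stop_time Y \<omega>) 1))
            = integral\<^sup>L M (\<lambda>\<omega>. real (stop_time Y \<omega>)) / lam
        \<and> integral\<^sup>L M (\<lambda>\<omega>. real (max (stop_time Y \<omega>) 1)) = exp (- lam) / (1 - lam))"
proof -
  interpret pois M Y lam
    using assms by (simp add: pois_def pois_axioms_def)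
  show ?thesis by (rule main)
qed

end
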